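(* Let $m,n\ge 2$ be integers with $n/m$ a positive integer, and suppose there exists a generalized quadrangle $\mathcal{G}$ of order $(m,n)$ which contains a subquadrangle $\mathcal{G}'$ of order $(m,n/m)$. Then there exists an $(m,n+1;8)$-bipartite biregular graph of order $(m+n+1)\frac{m^2-1}{m}n$.
   Context: A generalized quadrangle is a finite point-line incidence geometry whose incidence (Levi) graph — the bipartite graph on points and lines with a point adjacent to a line iff incident — is connected, of diameter 4 and girth 8. It has order $(s,t)$ if each line has exactly $s+1$ points and each point lies on exactly $t+1$ lines. A subquadrangle of $\mathcal{G}$ is a generalized quadrangle whose points and lines are subsets of those of $\mathcal{G}$ with the inherited incidence. For integers $a,b\geq 2$ and even $g\ge4$, an $(a,b;g)$-bipartite biregular graph is a finite simple bipartite graph of girth exactly $g$ in which all vertices of one bipartition class have degree $a$ and all vertices of the other class have degree $b$. *)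

theory Defs
  imports Main
begin

definition is_walk :: "('v \<Rightarrow> 'v \<Rightarrow> bool) \<Rightarrow> 'v list \<Rightarrow> bool" where
  "is_walk E xs \<longleftrightarrow> (\<forall>i. Suc i < length xs \<longrightarrow> E (xs ! i) (xs ! Suc i))"

definition is_cycle :: "'v set \<Rightarrow> ('v \<Rightarrow> 'v \<Rightarrow> bool) \<Rightarrow> 'v list \<Rightarrow> bool" where
  "is_cycle V E xs \<longleftrightarrow> length xs \<ge> 3 \<and> distinct xs \<and> set xs \<subseteq> V \<and> is_walk E xs
     \<and> E (last xs) (hd xs)"

definition has_girth :: "'v set \<Rightarrow> ('v \<Rightarrow> 'v \<Rightarrow> bool) \<Rightarrow> nat \<Rightarrow> bool" where
  "has_girth V E g \<longleftrightarrow> (\<exists>c. is_cycle V E c \<and> length c = g) \<and>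
     (\<forall>c. is_cycle V E c \<longrightarrow> g \<le> length c)"

text \<open>There is a walk in V from u to v with at most k edges (i.e. dist u v <= k).\<close>
definition reach_le :: "'v set \<Rightarrow> ('v \<Rightarrow> 'v \<Rightarrow> bool) \<Rightarrow> nat \<Rightarrow> 'v \<Rightarrow> 'v \<Rightarrow> bool" where
  "reach_le V E k u v \<longleftrightarrow> (\<exists>xs. xs \<noteq> [] \<and> set xs \<subseteq> V \<and> is_walk E xs \<and>
     hd xs = u \<and> last xs = v \<and> length xs \<le> Suc k)"

definition graph_connected :: "'v set \<Rightarrow> ('v \<Rightarrow> 'v \<Rightarrow> bool) \<Rightarrow> bool" where
  "graph_connected V E \<longleftrightarrow> (\<forall>u\<in>V. \<forall>v\<in>V. \<exists>k. reach_le V E k u v)"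

text \<open>Diameter exactly d (d \<ge> 1): all distances at most d, some distance exactly d.\<close>
definition has_diameter :: "'v set \<Rightarrow> ('v \<Rightarrow> 'v \<Rightarrow> bool) \<Rightarrow> nat \<Rightarrow> bool" where
  "has_diameter V E d \<longleftrightarrow> (\<forall>u\<in>V. \<forall>v\<in>V. reach_le V E d u v) \<and>
     (\<exists>u\<in>V. \<exists>v\<in>V. \<not> reach_le V E (d - 1) u v)"

definition simple_graph :: "'v set \<Rightarrow> ('v \<Rightarrow> 'v \<Rightarrow> bool) \<Rightarrow> bool" where
  "simple_graph V E \<longleftrightarrow> finite V \<and> (\<forall>x y. E x y \<longrightarrow> x \<in> V \<and> y \<in> V \<and> E y x \<and> x \<noteq> y)"

definition bipartite_biregular :: "nat \<Rightarrow> nat \<Rightarrow> nat \<Rightarrow> 'v set \<Rightarrow> ('v \<Rightarrow> 'v \<Rightarrow> bool) \<Rightarrow> bool" where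
  "bipartite_biregular a b g V E \<longleftrightarrow> simple_graph V E \<and>
     (\<exists>A B. A \<union> B = V \<and> A \<inter> B = {} \<and>
        (\<forall>x y. E x y \<longrightarrow> (x \<in> A \<and> y \<in> B) \<or> (x \<in> B \<and> y \<in> A)) \<and>
        (\<forall>x\<in>A. card {y \<in> V. E x y} = a) \<and>
        (\<forall>x\<in>B. card {y \<in> V. E x y} = b)) \<and>
     has_girth V E g"

definition levi_vertices :: "'p set \<Rightarrow> 'l set \<Rightarrow> ('p + 'l) set" where
  "levi_vertices P L = Inl ` P \<union> Inr ` L"

definition levi_adj :: "'p set \<Rightarrow> 'l set \<Rightarrow> ('p \<Rightarrow> 'l \<Rightarrow> bool) \<Rightarrow> 'p + 'l \<Rightarrow> 'p + 'l \<Rightarrow> bool" where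
  "levi_adj P L I x y \<longleftrightarrow> (\<exists>p l. p \<in> P \<and> l \<in> L \<and> I p l \<and>
     ((x = Inl p \<and> y = Inr l) \<or> (x = Inr l \<and> y = Inl p)))"

definition gen_quadrangle :: "'p set \<Rightarrow> 'l set \<Rightarrow> ('p \<Rightarrow> 'l \<Rightarrow> bool) \<Rightarrow> bool" where
  "gen_quadrangle P L I \<longleftrightarrow> finite P \<and> finite L \<and>
     graph_connected (levi_vertices P L) (levi_adj P L I) \<and>
     has_diameter (levi_vertices P L) (levi_adj P L I) 4 \<and>
     has_girth (levi_vertices P L) (levi_adj P L I) 8"

definition has_order :: "'p set \<Rightarrow> 'l set \<Rightarrow> ('p \<Rightarrow> 'l \<Rightarrow> bool) \<Rightarrow> nat \<Rightarrow> nat \<Rightarrow> bool" where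
  "has_order P L I s t \<longleftrightarrow> (\<forall>l\<in>L. card {p \<in> P. I p l} = s + 1) \<and>
     (\<forall>p\<in>P. card {l \<in> L. I p l} = t + 1)"

definition gen_quadrangle_of_order ::
  "'p set \<Rightarrow> 'l set \<Rightarrow> ('p \<Rightarrow> 'l \<Rightarrow> bool) \<Rightarrow> nat \<Rightarrow> nat \<Rightarrow> bool" where
  "gen_quadrangle_of_order P L I s t \<longleftrightarrow> gen_quadrangle P L I \<and> has_order P L I s t"

definition subquadrangle ::
  "'p set \<Rightarrow> 'l set \<Rightarrow> 'p set \<Rightarrow> 'l set \<Rightarrow> ('p \<Rightarrow> 'l \<Rightarrow> bool) \<Rightarrow> bool" where
  "subquadrangle P' L' P L I \<longleftrightarrow> P' \<subseteq> P \<and> L' \<subseteq> L \<and> gen_quadrangle P' L' I"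

end

theory Submission
  imports Defs
begin


lemma is_walk_Nil[simp]: "is_walk E []"
  by (simp add: is_walk_def)
lemma is_walk_single[simp]: "is_walk E [x]"
  by (simp add: is_walk_def)
lemma is_walk_Cons2[simp]: "is_walk E (x#y#xs) \<longleftrightarrow> E x y \<and> is_walk E (y#xs)"
  unfolding is_walk_def
  apply (auto simp: nth_Cons split: nat.splits)
  done

lemma levi_adj_simps[simp]:
  "levi_adj P L I (Inl p) (Inr l) \<longleftrightarrow> p \<in> P \<and> l \<in> L \<and> I p l"
  "levi_adj P L I (Inr l) (Inl p) \<longleftrightarrow> p \<in> P \<and> l \<in> L \<and> I p l"
  "levi_adj P L I (Inl p) (Inl q) \<longleftrightarrow> False"
  "levi_adj P L I (Inr l) (Inr k) \<longleftrightarrow> False"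
  by (auto simp: levi_adj_def)

lemma levi_adj_L: "levi_adj P L I (Inl p) y \<longleftrightarrow> (\<exists>l\<in>L. y = Inr l \<and> p \<in> P \<and> I p l)"
  by (cases y) auto
lemma levi_adj_R: "levi_adj P L I (Inr l) y \<longleftrightarrow> (\<exists>p\<in>P. y = Inl p \<and> l \<in> L \<and> I p l)"
  by (cases y) auto

lemma list_le5:
  assumes "xs \<noteq> []" "length xs \<le> 5"
  shows "(\<exists>a. xs=[a]) \<or> (\<exists>a b. xs=[a,b]) \<or> (\<exists>a b c. xs=[a,b,c]) \<or> (\<exists>a b c d. xs=[a,b,c,d])
     \<or> (\<exists>a b c d e. xs=[a,b,c,d,e])"
proof -
  have "length xs \<noteq> 0" using assms by simp
  then have "length xs = 1 \<or> length xs = 2 \<or> length xs = 3 \<or> length xs = 4 \<or> length xs = 5" using assms by arith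
  then show ?thesis by (auto simp: length_Suc_conv numeral_eq_Suc)
qed

lemma gq_girth:
  assumes "gen_quadrangle P L I" "is_cycle (levi_vertices P L) (levi_adj P L I) c"
  shows "8 \<le> length c"
  using assms by (auto simp: gen_quadrangle_def has_girth_def)

lemma gq_A1:
  assumes "gen_quadrangle P L I" "x\<in>P" "y\<in>P" "a\<in>L" "b\<in>L" "I x a" "I y a" "I x b" "I y b"
  shows "x = y \<or> a = b"
proof (rule ccontr)
  assume "\<not> (x = y \<or> a = b)"
  then have "is_cycle (levi_vertices P L) (levi_adj P L I) [Inl x, Inr a, Inl y, Inr b]"
    using assms by (auto simp: is_cycle_def levi_vertices_def)
  from gq_girth[OF assms(1) this] show False by simp
qed

lemma gq_tri:
  assumes "gen_quadrangle P L I" "x\<in>P" "y\<in>P" "z\<in>P" "a\<in>L" "b\<in>L" "c\<in>L"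
    "I x a" "I y a" "I y b" "I z b" "I z c" "I x c"
    "x \<noteq> y" "y \<noteq> z" "x \<noteq> z" "a \<noteq> b" "b \<noteq> c" "a \<noteq> c"
  shows False
proof -
  have "is_cycle (levi_vertices P L) (levi_adj P L I) [Inl x, Inr a, Inl y, Inr b, Inl z, Inr c]"
    using assms by (auto simp: is_cycle_def levi_vertices_def)
  from gq_girth[OF assms(1) this] show False by simp
qed

lemma gq_reach:
  assumes "gen_quadrangle P L I" "u \<in> levi_vertices P L" "v \<in> levi_vertices P L"
  obtains xs where "xs \<noteq> []" "set xs \<subseteq> levi_vertices P L" "is_walk (levi_adj P L I) xs"
     "hd xs = u" "last xs = v" "length xs \<le> 5"
  using assms unfolding gen_quadrangle_def has_diameter_def reach_le_def
proof -
  have "reach_le (levi_vertices P L) (levi_adj P L I) 4 u v"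
    using assms unfolding gen_quadrangle_def has_diameter_def by blast
  then show ?thesis using that unfolding reach_le_def by (auto simp: numeral_eq_Suc)
qed

lemma gq_A3:
  assumes "gen_quadrangle P L I" "p\<in>P" "l\<in>L" "\<not> I p l"
  shows "\<exists>q\<in>P. \<exists>k\<in>L. I p k \<and> I q k \<and> I q l"
proof -
  obtain xs where xs: "xs \<noteq> []" "set xs \<subseteq> levi_vertices P L" "is_walk (levi_adj P L I) xs"
     "hd xs = Inl p" "last xs = Inr l" "length xs \<le> 5"
    using gq_reach[OF assms(1), of "Inl p" "Inr l"] assms by (auto simp: levi_vertices_def)
  show ?thesis
    using list_le5[OF xs(1,6)] xs(2-5) assms
    apply (elim disjE exE)
        apply (fastforce simp: levi_adj_L levi_adj_R)+
    done
qed

lemma gq_pp: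
  assumes "gen_quadrangle P L I" "x\<in>P" "y\<in>P"
  shows "x = y \<or> (\<exists>k\<in>L. I x k \<and> I y k) \<or> (\<exists>k1\<in>L. \<exists>z\<in>P. \<exists>k2\<in>L. I x k1 \<and> I z k1 \<and> I z k2 \<and> I y k2)"
proof -
  obtain xs where xs: "xs \<noteq> []" "set xs \<subseteq> levi_vertices P L" "is_walk (levi_adj P L I) xs"
     "hd xs = Inl x" "last xs = Inl y" "length xs \<le> 5"
    using gq_reach[OF assms(1), of "Inl x" "Inl y"] assms by (auto simp: levi_vertices_def)
  show ?thesis
    using list_le5[OF xs(1,6)] xs(2-5) assms
    apply (elim disjE exE)
        apply (fastforce simp: levi_adj_L levi_adj_R)+
    done
qed



lemma sum_card_swap:
  assumes "finite A" "finite B"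
  shows "(\<Sum>a\<in>A. card {b\<in>B. R a b}) = (\<Sum>b\<in>B. card {a\<in>A. R a b})"
proof -
  have "(\<Sum>a\<in>A. card {b\<in>B. R a b}) = (\<Sum>a\<in>A. \<Sum>b\<in>B. if R a b then 1 else 0)"
    using assms by (simp add: sum.inter_filter[symmetric])
  also have "\<dots> = (\<Sum>b\<in>B. \<Sum>a\<in>A. if R a b then 1 else 0)" by (rule sum.swap)
  also have "\<dots> = (\<Sum>b\<in>B. card {a\<in>A. R a b})"
    using assms by (simp add: sum.inter_filter[symmetric])
  finally show ?thesis .
qed

lemma double_count:
  assumes "finite A" "finite B" "\<And>a. a\<in>A \<Longrightarrow> card {b\<in>B. R a b} = k"
    "\<And>b. b\<in>B \<Longrightarrow> card {a\<in>A. R a b} = j"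
  shows "card A * k = card B * j"
  using sum_card_swap[OF assms(1,2), of R] assms(3,4) by simp

locale gqax =
  fixes P :: "'p set" and L :: "'l set" and I :: "'p \<Rightarrow> 'l \<Rightarrow> bool" and s t :: nat
  assumes finP: "finite P" and finL: "finite L" and Pne: "P \<noteq> {}"
    and A1: "\<And>x y a b. \<lbrakk>x\<in>P; y\<in>P; a\<in>L; b\<in>L; I x a; I y a; I x b; I y b\<rbrakk> \<Longrightarrow> x = y \<or> a = b"
    and tri: "\<And>x y z a b c. \<lbrakk>x\<in>P; y\<in>P; z\<in>P; a\<in>L; b\<in>L; c\<in>L;
      I x a; I y a; I y b; I z b; I z c; I x c;
      x \<noteq> y; y \<noteq> z; x \<noteq> z; a \<noteq> b; b \<noteq> c; a \<noteq> c\<rbrakk> \<Longrightarrow> False"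
    and A3: "\<And>p l. \<lbrakk>p\<in>P; l\<in>L; \<not> I p l\<rbrakk> \<Longrightarrow> \<exists>q\<in>P. \<exists>k\<in>L. I p k \<and> I q k \<and> I q l"
    and ordL: "\<And>l. l\<in>L \<Longrightarrow> card {p\<in>P. I p l} = s + 1"
    and ordP: "\<And>p. p\<in>P \<Longrightarrow> card {l\<in>L. I p l} = t + 1"
begin

definition col where "col x y \<longleftrightarrow> (\<exists>l\<in>L. I x l \<and> I y l)"

lemma lines_ne: "p \<in> P \<Longrightarrow> \<exists>l\<in>L. I p l"
proof (rule ccontr)
  assume "p \<in> P" "\<not> (\<exists>l\<in>L. I p l)"
  then have "{l\<in>L. I p l} = {}" by auto
  with ordP[OF \<open>p\<in>P\<close>] show False by simp
qed

lemma col_refl: "p \<in> P \<Longrightarrow> col p p"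
  using lines_ne by (auto simp: col_def)

lemma card_P: "card P = (s+1)*(s*t+1)"
proof -
  obtain x where x: "x \<in> P" using Pne by auto
  define N where "N = {y\<in>P. y \<noteq> x \<and> col x y}"
  define R where "R = {y\<in>P. \<not> col x y}"
  have Pdec: "P = {x} \<union> N \<union> R" using x col_refl by (auto simp: N_def R_def)
  have finN: "finite N" and finR: "finite R" using finP by (auto simp: N_def R_def)
  have cP: "card P = 1 + card N + card R"
  proof -
    have "card P = card ({x} \<union> N) + card R"
      unfolding Pdec by (rule card_Un_disjoint) (use finN finR col_refl x in \<open>auto simp: N_def R_def\<close>)
    moreover have "card ({x} \<union> N) = 1 + card N"
      using finN by (simp add: N_def)
    ultimately show ?thesis by simp
  qed
  have onl: "card ({p\<in>P. I p l} - {z}) = s" if "l \<in> L" "z\<in>P" "I z l" for l z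
    using ordL[OF that(1)] that finP by (simp add: card_Diff_singleton)
  have cN: "card N = (t+1)*s"
  proof -
    have "N = (\<Union>l\<in>{l\<in>L. I x l}. {p\<in>P. I p l} - {x})"
      by (auto simp: N_def col_def)
    also have "card \<dots> = (\<Sum>l\<in>{l\<in>L. I x l}. card ({p\<in>P. I p l} - {x}))"
      apply (rule card_UN_disjoint)
      using finL finP apply auto
      using A1 x by blast
    also have "\<dots> = (\<Sum>l\<in>{l\<in>L. I x l}. s)"
      using onl x by simp
    finally show ?thesis using ordP[OF x] by simp
  qed
  have dR: "card {z\<in>N. col y z} = t+1" if y: "y \<in> R" for y
  proof -
    have yP: "y \<in> P" and nc: "\<not> col x y" using y by (auto simp: R_def)
    have "{z\<in>N. col y z} = (\<Union>k\<in>{k\<in>L. I y k}. {z\<in>P. I z k \<and> col x z})"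
      using x nc by (auto simp: N_def col_def)
    also have "card \<dots> = (\<Sum>k\<in>{k\<in>L. I y k}. card {z\<in>P. I z k \<and> col x z})"
      apply (rule card_UN_disjoint)
      using finL finP apply auto
      using A1 yP nc unfolding col_def by metis
    also have "\<dots> = (\<Sum>k\<in>{k\<in>L. I y k}. 1)"
    proof (rule sum.cong[OF refl])
      fix k assume k: "k \<in> {k\<in>L. I y k}"
      have xk: "\<not> I x k" using k nc by (auto simp: col_def)
      obtain q e where q: "q\<in>P" "e\<in>L" "I x e" "I q e" "I q k" using A3[OF x _ xk] k by auto
      have "{z\<in>P. I z k \<and> col x z} = {q}"
      proof
        show "{q} \<subseteq> {z\<in>P. I z k \<and> col x z}" using q by (auto simp: col_def)
        show "{z\<in>P. I z k \<and> col x z} \<subseteq> {q}"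
        proof
          fix z assume z: "z \<in> {z\<in>P. I z k \<and> col x z}"
          then obtain f where f: "f\<in>L" "I x f" "I z f" by (auto simp: col_def)
          show "z \<in> {q}"
          proof (rule ccontr)
            assume "z \<notin> {q}"
            then have zq: "z \<noteq> q" by simp
            have "x \<noteq> z" using z xk by auto
            moreover have "x \<noteq> q" using q xk by auto
            moreover have "e \<noteq> k" using q xk by auto
            moreover have "f \<noteq> k" using f xk by auto
            moreover have "e \<noteq> f" using A1[of q z e k] q f z zq k \<open>e \<noteq> k\<close> by auto
            ultimately show False
              using tri[of x q z e k f] q f z k x zq by auto
          qed
        qed
      qed
      then show "card {z\<in>P. I z k \<and> col x z} = 1" by simp
    qed
    finally show ?thesis using ordP[OF yP] by simp
  qed
  have dN: "card {y\<in>R. col y z} = t*s" if z: "z \<in> N" for z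
  proof -
    have zP: "z \<in> P" and zx: "z \<noteq> x" and cz: "col x z" using z by (auto simp: N_def)
    obtain e0 where e0: "e0 \<in> L" "I x e0" "I z e0" using cz by (auto simp: col_def)
    have "{y\<in>R. col y z} = (\<Union>k\<in>{k\<in>L. I z k} - {e0}. {p\<in>P. I p k} - {z})"
    proof
      show "{y\<in>R. col y z} \<subseteq> (\<Union>k\<in>{k\<in>L. I z k} - {e0}. {p\<in>P. I p k} - {z})"
      proof
        fix y assume y: "y \<in> {y\<in>R. col y z}"
        then obtain k where k: "k\<in>L" "I y k" "I z k" by (auto simp: col_def)
        have "k \<noteq> e0" using y k e0 by (auto simp: R_def col_def)
        moreover have "y \<noteq> z" using y cz by (auto simp: R_def col_def)
        ultimately show "y \<in> (\<Union>k\<in>{k\<in>L. I z k} - {e0}. {p\<in>P. I p k} - {z})"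
          using k y by (auto simp: R_def)
      qed
      show "(\<Union>k\<in>{k\<in>L. I z k} - {e0}. {p\<in>P. I p k} - {z}) \<subseteq> {y\<in>R. col y z}"
      proof
        fix y assume "y \<in> (\<Union>k\<in>{k\<in>L. I z k} - {e0}. {p\<in>P. I p k} - {z})"
        then obtain k where k: "k\<in>L" "I z k" "k \<noteq> e0" "y \<in> P" "I y k" "y \<noteq> z" by auto
        have "\<not> col x y"
        proof
          assume "col x y"
          then obtain f where f: "f\<in>L" "I x f" "I y f" by (auto simp: col_def)
          have yx: "y \<noteq> x" using A1[of x z k e0] k e0 x zP zx by auto
          have "f \<noteq> e0" using A1[of y z e0 k] k e0 f zP by auto
          moreover have "f \<noteq> k" using A1[of x z k e0] k e0 f zP x zx by auto
          ultimately show False using tri[of x z y e0 k f] x zP k e0 f yx zx by auto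
        qed
        then show "y \<in> {y\<in>R. col y z}" using k by (auto simp: R_def col_def)
      qed
    qed
    also have "card \<dots> = (\<Sum>k\<in>{k\<in>L. I z k} - {e0}. card ({p\<in>P. I p k} - {z}))"
      apply (rule card_UN_disjoint)
      using finL finP apply auto
      using A1 zP by blast
    also have "\<dots> = (\<Sum>k\<in>{k\<in>L. I z k} - {e0}. s)"
      using onl zP by simp
    also have "\<dots> = t * s"
      using ordP[OF zP] e0 finL by (simp add: card_Diff_singleton)
    finally show ?thesis .
  qed
  have "card R * (t+1) = card N * (t*s)"
    by (rule double_count[OF finR finN, of "\<lambda>y z. col y z"]) (use dR dN in auto)
  then have "card R * (t+1) = (s*s*t) * (t+1)" using cN by (simp add: algebra_simps)
  then have "card R = s*s*t" using mult_cancel2[of "card R" "t+1" "s*s*t"] by simp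
  then show ?thesis using cP cN by (simp add: algebra_simps)
qed

end

lemma gqax_dual:
  assumes "gqax P L I s t"
  shows "gqax L P (\<lambda>l p. I p l) t s"
proof -
  interpret gqax P L I s t by fact
  have "L \<noteq> {}" using Pne lines_ne by blast
  show ?thesis
  proof
    show "finite L" "finite P" "L \<noteq> {}" by (fact finL finP \<open>L \<noteq> {}\<close>)+
    show "x = y \<or> a = b" if "x\<in>L" "y\<in>L" "a\<in>P" "b\<in>P" "I a x" "I a y" "I b x" "I b y" for x y a b
      using A1[of a b x y] that by blast
    show False if "x\<in>L" "y\<in>L" "z\<in>L" "a\<in>P" "b\<in>P" "c\<in>P"
      "I a x" "I a y" "I b y" "I b z" "I c z" "I c x"
      "x \<noteq> y" "y \<noteq> z" "x \<noteq> z" "a \<noteq> b" "b \<noteq> c" "a \<noteq> c" for x y z a b c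
      using tri[of a b c y z x] that by blast
    show "\<exists>q\<in>L. \<exists>k\<in>P. I k p \<and> I k q \<and> I l q" if "p\<in>L" "l\<in>P" "\<not> I l p" for p l
      using A3[of l p] that by blast
    show "card {p \<in> L. I l p} = t + 1" if "l \<in> P" for l using ordP that by simp
    show "card {l \<in> P. I l p} = s + 1" if "p \<in> L" for p using ordL that by simp
  qed
qed

lemma gq_to_ax:
  assumes "gen_quadrangle P L I" "has_order P L I s t"
  shows "gqax P L I s t"
proof
  show "finite P" "finite L" using assms by (auto simp: gen_quadrangle_def)
  show "P \<noteq> {}"
  proof
    assume P0: "P = {}"
    obtain u where "u \<in> levi_vertices P L"
      using assms(1) unfolding gen_quadrangle_def has_diameter_def by blast
    then obtain l where "l \<in> L" using P0 by (auto simp: levi_vertices_def)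
    then have "card {p\<in>P. I p l} = s + 1" using assms(2) by (auto simp: has_order_def)
    with P0 show False by simp
  qed
  show "\<And>x y a b. \<lbrakk>x\<in>P; y\<in>P; a\<in>L; b\<in>L; I x a; I y a; I x b; I y b\<rbrakk> \<Longrightarrow> x = y \<or> a = b"
    using gq_A1[OF assms(1)] by blast
  show "\<And>x y z a b c. \<lbrakk>x\<in>P; y\<in>P; z\<in>P; a\<in>L; b\<in>L; c\<in>L;
      I x a; I y a; I y b; I z b; I z c; I x c;
      x \<noteq> y; y \<noteq> z; x \<noteq> z; a \<noteq> b; b \<noteq> c; a \<noteq> c\<rbrakk> \<Longrightarrow> False"
    using gq_tri[OF assms(1)] by blast
  show "\<And>p l. \<lbrakk>p\<in>P; l\<in>L; \<not> I p l\<rbrakk> \<Longrightarrow> \<exists>q\<in>P. \<exists>k\<in>L. I p k \<and> I q k \<and> I q l"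
    using gq_A3[OF assms(1)] by blast
  show "\<And>l. l\<in>L \<Longrightarrow> card {p\<in>P. I p l} = s + 1" "\<And>p. p\<in>P \<Longrightarrow> card {l\<in>L. I p l} = t + 1"
    using assms(2) by (auto simp: has_order_def)
qed

lemma gq_cards:
  assumes "gen_quadrangle P L I" "has_order P L I s t"
  shows "card P = (s+1)*(s*t+1)" "card L = (t+1)*(t*s+1)"
proof -
  have G: "gqax P L I s t" by (rule gq_to_ax[OF assms])
  show "card P = (s+1)*(s*t+1)" using gqax.card_P[OF G] .
  show "card L = (t+1)*(t*s+1)" using gqax.card_P[OF gqax_dual[OF G]] .
qed



lemma cycle_map:
  assumes "is_cycle V E c" "inj_on f V" "\<And>x y. x\<in>V \<Longrightarrow> y\<in>V \<Longrightarrow> E x y \<Longrightarrow> E' (f x) (f y)"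
    "f ` V \<subseteq> V'"
  shows "is_cycle V' E' (map f c)"
proof -
  have c: "length c \<ge> 3" "distinct c" "set c \<subseteq> V" "is_walk E c" "E (last c) (hd c)"
    using assms(1) by (auto simp: is_cycle_def)
  have ne: "c \<noteq> []" using c(1) by auto
  have "distinct (map f c)" using c(2,3) assms(2) by (simp add: distinct_map inj_on_subset)
  moreover have "is_walk E' (map f c)"
    unfolding is_walk_def
  proof (intro allI impI)
    fix i assume "Suc i < length (map f c)"
    then have i: "Suc i < length c" by simp
    then have "E (c!i) (c!Suc i)" using c(4) by (auto simp: is_walk_def)
    moreover have "c!i \<in> V" "c!Suc i \<in> V" using i c(3) nth_mem[of i c] nth_mem[of "Suc i" c] by auto
    ultimately show "E' (map f c ! i) (map f c ! Suc i)" using assms(3) i by simp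
  qed
  moreover have "E' (last (map f c)) (hd (map f c))"
  proof -
    have "last c \<in> V" "hd c \<in> V" using ne c(3) by auto
    then show ?thesis using ne c(5) assms(3) by (simp add: last_map hd_map)
  qed
  ultimately show ?thesis using c assms(4) by (auto simp: is_cycle_def)
qed

lemma bb_nat:
  assumes "bipartite_biregular a b g W E"
  shows "\<exists>(V::nat set) E'. bipartite_biregular a b g V E' \<and> card V = card W"
proof -
  have sg: "simple_graph W E" using assms by (simp add: bipartite_biregular_def)
  then have finW: "finite W" by (simp add: simple_graph_def)
  obtain h :: "_ \<Rightarrow> nat" where h: "bij_betw h W {0..<card W}"
    using ex_bij_betw_finite_nat[OF finW] by blast
  define V where "V = {0..<card W}"
  define h' where "h' = inv_into W h"
  have h'b: "bij_betw h' V W" unfolding V_def h'_def by (rule bij_betw_inv_into[OF h])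
  have hh': "\<And>i. i \<in> V \<Longrightarrow> h (h' i) = i" unfolding h'_def V_def
    using h by (simp add: bij_betw_def f_inv_into_f)
  have h'h: "\<And>x. x \<in> W \<Longrightarrow> h' (h x) = x" unfolding h'_def
    using h by (simp add: bij_betw_def)
  have hV: "\<And>x. x\<in>W \<Longrightarrow> h x \<in> V" using h unfolding V_def bij_betw_def by auto
  have h'W: "\<And>i. i\<in>V \<Longrightarrow> h' i \<in> W" using h'b unfolding bij_betw_def by auto
  define E' where "E' i j \<longleftrightarrow> i\<in>V \<and> j\<in>V \<and> E (h' i) (h' j)" for i j
  have Esg: "\<And>x y. E x y \<Longrightarrow> x\<in>W \<and> y\<in>W \<and> E y x \<and> x \<noteq> y" using sg by (simp add: simple_graph_def)
  have sg': "simple_graph V E'"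
    unfolding simple_graph_def
  proof (intro conjI allI impI)
    show "finite V" by (simp add: V_def)
    fix x y assume "E' x y"
    then have xy: "x\<in>V" "y\<in>V" "E (h' x) (h' y)" by (auto simp: E'_def)
    then have "E (h' y) (h' x)" "h' x \<noteq> h' y" using Esg by blast+
    then show "x \<in> V" "y \<in> V" "E' y x" "x \<noteq> y" using xy by (auto simp: E'_def)
  qed
  obtain A B where AB: "A \<union> B = W" "A \<inter> B = {}"
    "\<forall>x y. E x y \<longrightarrow> (x \<in> A \<and> y \<in> B) \<or> (x \<in> B \<and> y \<in> A)"
    "\<forall>x\<in>A. card {y \<in> W. E x y} = a" "\<forall>x\<in>B. card {y \<in> W. E x y} = b"
    using assms[unfolded bipartite_biregular_def, THEN conjunct2, THEN conjunct1] by blast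
  have injh: "inj_on h W" using h by (simp add: bij_betw_def)
  have deg: "card {j\<in>V. E' (h x) j} = card {y \<in> W. E x y}" if x: "x \<in> W" for x
  proof -
    have "{j\<in>V. E' (h x) j} = h ` {y \<in> W. E x y}"
    proof
      show "{j\<in>V. E' (h x) j} \<subseteq> h ` {y \<in> W. E x y}"
      proof
        fix j assume j: "j \<in> {j\<in>V. E' (h x) j}"
        then have "j = h (h' j)" "h' j \<in> W" "E x (h' j)" using hh' h'W h'h x by (auto simp: E'_def)
        then show "j \<in> h ` {y \<in> W. E x y}" by blast
      qed
      show "h ` {y \<in> W. E x y} \<subseteq> {j\<in>V. E' (h x) j}"
        using hV h'h x by (auto simp: E'_def)
    qed
    moreover have "inj_on h {y \<in> W. E x y}" using injh by (rule inj_on_subset) auto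
    ultimately show ?thesis by (simp add: card_image)
  qed
  have part: "h ` A \<union> h ` B = V \<and> h ` A \<inter> h ` B = {} \<and>
        (\<forall>x y. E' x y \<longrightarrow> (x \<in> h ` A \<and> y \<in> h ` B) \<or> (x \<in> h ` B \<and> y \<in> h ` A)) \<and>
        (\<forall>x\<in>h ` A. card {y \<in> V. E' x y} = a) \<and>
        (\<forall>x\<in>h ` B. card {y \<in> V. E' x y} = b)"
  proof (intro conjI)
    show "h ` A \<union> h ` B = V" using AB(1) h unfolding V_def
      by (simp add: image_Un[symmetric] bij_betw_imp_surj_on)
    show "h ` A \<inter> h ` B = {}" using inj_on_image_Int[OF injh, of A B] AB(1,2) by auto
    show "\<forall>x y. E' x y \<longrightarrow> (x \<in> h ` A \<and> y \<in> h ` B) \<or> (x \<in> h ` B \<and> y \<in> h ` A)"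
    proof (intro allI impI)
      fix x y assume "E' x y"
      then have xy: "x\<in>V" "y\<in>V" "E (h' x) (h' y)" by (auto simp: E'_def)
      then have "(h' x \<in> A \<and> h' y \<in> B) \<or> (h' x \<in> B \<and> h' y \<in> A)" using AB(3) by blast
      moreover have "x = h (h' x)" "y = h (h' y)" using xy hh' by auto
      ultimately show "(x \<in> h ` A \<and> y \<in> h ` B) \<or> (x \<in> h ` B \<and> y \<in> h ` A)"
        by (metis imageI)
    qed
    show "\<forall>x\<in>h ` A. card {y \<in> V. E' x y} = a" using deg AB(1,4) by auto
    show "\<forall>x\<in>h ` B. card {y \<in> V. E' x y} = b" using deg AB(1,5) by auto
  qed
  have gW: "has_girth W E g" using assms by (simp add: bipartite_biregular_def)
  have gV: "has_girth V E' g"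
    unfolding has_girth_def
  proof (intro conjI allI impI)
    obtain c where c: "is_cycle W E c" "length c = g" using gW by (auto simp: has_girth_def)
    have "is_cycle V E' (map h c)"
      by (rule cycle_map[OF c(1) injh]) (use hV h'h Esg in \<open>auto simp: E'_def\<close>)
    then show "\<exists>c. is_cycle V E' c \<and> length c = g" using c(2) by auto
  next
    fix c assume c: "is_cycle V E' c"
    have "inj_on h' V" using h'b by (simp add: bij_betw_def)
    then have "is_cycle W E (map h' c)"
      by (rule cycle_map[OF c]) (use h'W in \<open>auto simp: E'_def\<close>)
    then show "g \<le> length c" using gW by (auto simp: has_girth_def)
  qed
  have "bipartite_biregular a b g V E'"
    unfolding bipartite_biregular_def
    apply (rule conjI[OF sg'])
    apply (rule conjI[OF _ gV])
    apply (rule exI[of _ "h ` A"], rule exI[of _ "h ` B"])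
    by (rule part)
  moreover have "card V = card W" by (simp add: V_def)
  ultimately show ?thesis by blast
qed



lemma card3:
  assumes "finite S" "3 \<le> card S"
  shows "\<exists>a b c. a\<in>S \<and> b\<in>S \<and> c\<in>S \<and> a\<noteq>b \<and> a\<noteq>c \<and> b\<noteq>c"
proof -
  obtain a where a: "a \<in> S" using assms by fastforce
  have "card (S - {a}) \<ge> 2" using assms a by (simp add: card_Diff_singleton)
  then have "S - {a} \<noteq> {}" by (intro notI) simp
  then obtain b where b: "b \<in> S - {a}" by blast
  have "card (S - {a} - {b}) \<ge> 1" using assms a b \<open>card (S - {a}) \<ge> 2\<close>
    by (simp add: card_Diff_singleton)
  then have "S - {a} - {b} \<noteq> {}" by (intro notI) simp
  then obtain c where c: "c \<in> S - {a} - {b}" by blast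
  show ?thesis using a b c by blast
qed

lemma card_ex_other:
  assumes "finite S" "2 \<le> card S"
  shows "\<exists>q\<in>S. q \<noteq> u"
proof -
  have "card (S - {u}) \<ge> 1" using assms
    by (cases "u \<in> S") (auto simp: card_Diff_singleton)
  then have "S - {u} \<noteq> {}" by (intro notI) simp
  then show ?thesis by blast
qed

theorem mainTheorem6:
  fixes m n :: nat
    and P P' :: "'p set" and L L' :: "'l set" and I :: "'p \<Rightarrow> 'l \<Rightarrow> bool"
  assumes "m \<ge> 2" and "n \<ge> 2" and "m dvd n"
    and "gen_quadrangle_of_order P L I m n"
    and "subquadrangle P' L' P L I"
    and "has_order P' L' I m (n div m)"
  shows "\<exists>(V :: nat set) E. bipartite_biregular m (n + 1) 8 V E \<and>
           card V = (m + n + 1) * (m\<^sup>2 - 1) * (n div m)"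
proof -
  define t where "t = n div m"
  have nmt: "n = m * t" using assms(3) by (simp add: t_def)
  have t1: "t \<ge> 1" using assms(1,2) nmt by (cases t) auto
  have tn: "t < n" using nmt assms(1) t1 by simp
  have GQ: "gen_quadrangle P L I" and GO: "has_order P L I m n"
    using assms(4) by (auto simp: gen_quadrangle_of_order_def)
  have sub: "P' \<subseteq> P" "L' \<subseteq> L" and GQ': "gen_quadrangle P' L' I"
    using assms(5) by (auto simp: subquadrangle_def)
  have GO': "has_order P' L' I m t" using assms(6) by (simp add: t_def)
  interpret G: gqax P L I m n by (rule gq_to_ax[OF GQ GO])
  interpret H: gqax P' L' I m t by (rule gq_to_ax[OF GQ' GO'])
  have cP: "card P = (m+1)*(m*n+1)" and cL: "card L = (n+1)*(n*m+1)" using gq_cards[OF GQ GO] by auto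
  have cP': "card P' = (m+1)*(m*t+1)" and cL': "card L' = (t+1)*(t*m+1)" using gq_cards[OF GQ' GO'] by auto
  have f1: "p \<in> P'" if "l \<in> L'" "p \<in> P" "I p l" for l p
  proof -
    have "{p\<in>P'. I p l} = {p\<in>P. I p l}"
      apply (rule card_subset_eq)
      using G.finP sub that H.ordL[of l] G.ordL[of l] by auto
    then show ?thesis using that by auto
  qed
  have f2: "x = y" if l: "l \<in> L" "l \<notin> L'" and xy0: "x \<in> P'" "y \<in> P'" and inc: "I x l" "I y l" for l x y
  proof (rule ccontr)
    assume xy: "x \<noteq> y"
    have xP: "x \<in> P" "y \<in> P" using xy0 sub by auto
    from gq_pp[OF GQ' xy0] xy show False
    proof (elim disjE bexE conjE)
      assume "x = y" then show False using xy by simp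
    next
      fix k assume k: "k \<in> L'" "I x k" "I y k"
      then have "k \<in> L" "k \<noteq> l" using sub l by auto
      then show False using G.A1[of x y l k] xP l(1) inc k(2,3) xy by blast
    next
      fix k1 z k2 assume h: "k1 \<in> L'" "z \<in> P'" "k2 \<in> L'" "I x k1" "I z k1" "I z k2" "I y k2"
      have k1l: "k1 \<noteq> l" "k2 \<noteq> l" using h l by auto
      have kL: "k1 \<in> L" "k2 \<in> L" using h sub by auto
      have zP: "z \<in> P" using h sub by auto
      show False
      proof (cases "z = x \<or> z = y \<or> k1 = k2")
        case True
        then show ?thesis
        proof (elim disjE)
          assume "z = x" then show False using G.A1[of x y l k2] xP l(1) kL inc h xy k1l by blast
        next
          assume "z = y" then show False using G.A1[of x y l k1] xP l(1) kL inc h xy k1l by blast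
        next
          assume "k1 = k2" then show False using G.A1[of x y l k1] xP l(1) kL inc h xy k1l by blast
        qed
      next
        case False
        then have "z \<noteq> x" "z \<noteq> y" "k1 \<noteq> k2" by auto
        then show False using G.tri[of x z y k1 k2 l] xP zP l(1) kL h inc k1l xy by blast
      qed
    qed
  qed
  \<comment> \<open>counting: every line outside L' has exactly one point of P'\<close>
  have finL: "finite L" "finite P" "finite L'" "finite P'" using G.finP G.finL H.finP H.finL by auto
  have le1: "card {x\<in>P'. I x l} \<le> 1" if "l \<in> L - L'" for l
  proof -
    have "\<forall>x\<in>{x\<in>P'. I x l}. \<forall>y\<in>{x\<in>P'. I x l}. x = y" using f2[of l] that by blast
    then show ?thesis using finL by (simp add: card_le_Suc0_iff_eq)
  qed
  have sumeq: "(\<Sum>l\<in>L - L'. card {x\<in>P'. I x l}) = card P' * (n - t)"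
  proof -
    have "(\<Sum>l\<in>L - L'. card {x\<in>P'. I x l}) = (\<Sum>x\<in>P'. card {l\<in>L - L'. I x l})"
      using sum_card_swap[of "L - L'" P' "\<lambda>l x. I x l"] finL by simp
    also have "\<dots> = (\<Sum>x\<in>P'. n - t)"
    proof (rule sum.cong[OF refl])
      fix x assume x: "x \<in> P'"
      have "{l\<in>L - L'. I x l} = {l\<in>L. I x l} - {l\<in>L'. I x l}" by auto
      moreover have "{l\<in>L'. I x l} \<subseteq> {l\<in>L. I x l}" using sub by auto
      ultimately have "card {l\<in>L - L'. I x l} = card {l\<in>L. I x l} - card {l\<in>L'. I x l}"
        using finL by (simp add: card_Diff_subset)
      also have "\<dots> = n - t" using G.ordP[of x] H.ordP[OF x] x sub by auto
      finally show "card {l\<in>L - L'. I x l} = n - t" .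
    qed
    finally show ?thesis by simp
  qed
  obtain k where k: "m = Suc k" using assms(1) by (cases m) auto
  have cLx: "card (L - L') = card P' * (n - t)"
  proof -
    have "card (L - L') = card L - card L'" using finL sub by (simp add: card_Diff_subset)
    moreover have "card L = card P' * (n - t) + card L'"
    proof -
      have "n - t = k * t" using nmt k by simp
      then show ?thesis unfolding cL cP' cL' nmt k by (simp add: algebra_simps)
    qed
    ultimately show ?thesis by simp
  qed
  have one: "card {x\<in>P'. I x l} = 1" if l: "l \<in> L - L'" for l
  proof (rule ccontr)
    assume "card {x\<in>P'. I x l} \<noteq> 1"
    then have "card {x\<in>P'. I x l} < 1" using le1[OF l] by simp
    then have "(\<Sum>l\<in>L - L'. card {x\<in>P'. I x l}) < (\<Sum>l\<in>L - L'. 1)"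
      using le1 l finL by (intro sum_strict_mono_ex1) auto
    then show False using sumeq cLx by simp
  qed
  define Px where "Px = P - P'"
  define Lx where "Lx = L - L'"
  have f1': "l \<in> Lx" if "p \<in> Px" "l \<in> L" "I p l" for p l
    using f1[of l p] that by (auto simp: Px_def Lx_def)
  have extc: "card {p\<in>Px. I p l} = m" if l: "l \<in> Lx" for l
  proof -
    have "{p\<in>Px. I p l} = {p\<in>P. I p l} - {x\<in>P'. I x l}" by (auto simp: Px_def)
    moreover have "{x\<in>P'. I x l} \<subseteq> {p\<in>P. I p l}" using sub by auto
    ultimately have "card {p\<in>Px. I p l} = card {p\<in>P. I p l} - card {x\<in>P'. I x l}"
      using finL by (simp add: card_Diff_subset)
    then show ?thesis using one[of l] G.ordL[of l] l by (simp add: Lx_def)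
  qed
  have finX: "finite Px" "finite Lx" using finL by (auto simp: Px_def Lx_def)
  define W where "W = Inl ` Px \<union> Inr ` Lx"
  define EH where "EH x y \<longleftrightarrow> x \<in> W \<and> y \<in> W \<and> levi_adj P L I x y" for x y
  have finW: "finite W" using finX by (simp add: W_def)
  have levi_sym: "levi_adj P L I x y \<Longrightarrow> levi_adj P L I y x" for x y
    by (auto simp: levi_adj_def)
  have levi_irr: "\<not> levi_adj P L I x x" for x
    by (cases x) auto
  have sgH: "simple_graph W EH"
    unfolding simple_graph_def EH_def using finW levi_sym levi_irr by blast
  have WsubV: "W \<subseteq> levi_vertices P L" using sub by (auto simp: W_def Px_def Lx_def levi_vertices_def)
  have girth_lb: "8 \<le> length cy" if "is_cycle W EH cy" for cy
  proof -
    have "is_cycle (levi_vertices P L) (levi_adj P L I) (map id cy)"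
      by (rule cycle_map[OF that]) (use WsubV in \<open>auto simp: EH_def\<close>)
    then show ?thesis using gq_girth[OF GQ] by simp
  qed
  have degL: "card {y\<in>W. EH (Inr l) y} = m" if l: "l \<in> Lx" for l
  proof -
    have "{y\<in>W. EH (Inr l) y} = Inl ` {p\<in>Px. I p l}"
      using l by (auto simp: EH_def W_def levi_adj_R Px_def Lx_def)
    then show ?thesis using extc[OF l] by (simp add: card_image)
  qed
  have degP: "card {y\<in>W. EH (Inl p) y} = n + 1" if p: "p \<in> Px" for p
  proof -
    have "{y\<in>W. EH (Inl p) y} = Inr ` {l\<in>L. I p l}"
      using p f1' by (auto simp: EH_def W_def levi_adj_L Px_def Lx_def)
    then show ?thesis using G.ordP[of p] p by (simp add: card_image Px_def)
  qed
  have cyc8: "\<exists>cy. is_cycle W EH cy \<and> length cy = 8"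
  proof (rule ccontr)
    assume nocyc: "\<not> (\<exists>cy. is_cycle W EH cy \<and> length cy = 8)"
    obtain x0 where x0: "x0 \<in> P'" using H.Pne by auto
    have "{l\<in>L'. I x0 l} \<subseteq> {l\<in>L. I x0 l}" using sub by auto
    moreover have "card {l\<in>L'. I x0 l} < card {l\<in>L. I x0 l}"
      using H.ordP[OF x0] G.ordP[of x0] x0 sub tn by auto
    ultimately have "{l\<in>L'. I x0 l} \<noteq> {l\<in>L. I x0 l}" by auto
    then obtain l0 where l0: "l0 \<in> L" "I x0 l0" "l0 \<notin> L'" using sub by auto
    have l0x: "l0 \<in> Lx" using l0 by (simp add: Lx_def)
    obtain p where p: "p \<in> Px" "I p l0"
      using card_ex_other[of "{p\<in>Px. I p l0}" x0] extc[OF l0x] assms(1) finX by auto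
    have pP: "p \<in> P" "p \<notin> P'" using p by (auto simp: Px_def)
    have "3 \<le> card {l\<in>L. I p l}" using G.ordP[OF pP(1)] assms(2) by simp
    then obtain k1 k2 k3 where kk: "k1 \<in> L" "I p k1" "k2 \<in> L" "I p k2" "k3 \<in> L" "I p k3"
        "k1 \<noteq> k2" "k1 \<noteq> k3" "k2 \<noteq> k3"
      using card3[of "{l\<in>L. I p l}"] finL by auto
    have kx: "k1 \<in> Lx" "k2 \<in> Lx" "k3 \<in> Lx" using f1' p kk by auto
    have ptk: "\<exists>x. {x\<in>P'. I x k} = {x}" if "k \<in> Lx" for k
      using one[of k] that by (auto simp: Lx_def card_1_singleton_iff)
    obtain x2 where x2s: "{x\<in>P'. I x k2} = {x2}" using ptk[OF kx(2)] by auto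
    obtain x3 where x3s: "{x\<in>P'. I x k3} = {x3}" using ptk[OF kx(3)] by auto
    have x2: "x2 \<in> P'" "I x2 k2" using x2s by auto
    have x3: "x3 \<in> P'" "I x3 k3" using x3s by auto
    have x2P: "x2 \<in> P" "x3 \<in> P" using x2 x3 sub by auto
    obtain a where a: "a \<in> Px" "I a k1" "a \<noteq> p"
      using card_ex_other[of "{p\<in>Px. I p k1}" p] extc[OF kx(1)] assms(1) finX by auto
    have aP: "a \<in> P" using a by (simp add: Px_def)
    define J where "J = {j\<in>L. I a j} - {k1}"
    have cJ: "card J = n" using G.ordP[OF aP] kk(1) a(2) finL by (simp add: J_def card_Diff_singleton)
    define c where "c j = (SOME q. q \<in> Px \<and> I q j \<and> q \<noteq> a)" for j
    have cprop: "c j \<in> Px \<and> I (c j) j \<and> c j \<noteq> a" if j: "j \<in> J" for j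
    proof -
      have "j \<in> Lx" using f1'[OF a(1)] j by (auto simp: J_def)
      then have "\<exists>q. q \<in> Px \<and> I q j \<and> q \<noteq> a"
        using card_ex_other[of "{p\<in>Px. I p j}" a] extc assms(1) finX by auto
      then show ?thesis unfolding c_def by (rule someI_ex)
    qed
    have jL: "j \<in> L" "I a j" "j \<noteq> k1" if "j \<in> J" for j using that by (auto simp: J_def)
    have pc: "p \<noteq> c j" if j: "j \<in> J" for j
    proof
      assume "p = c j"
      then have "I p j" using cprop[OF j] by simp
      then show False using G.A1[of p a j k1] pP aP jL[OF j] kk a by auto
    qed
    have nk1: "\<not> I (c j) k1" if j: "j \<in> J" for j
    proof
      assume h: "I (c j) k1"
      have "c j \<in> P" using cprop[OF j] by (simp add: Px_def)
      then show False using G.A1[of "c j" a j k1] h aP jL[OF j] kk a cprop[OF j] by auto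
    qed
    have npj: "\<not> I p j" if j: "j \<in> J" for j
      using G.A1[of p a j k1] pP aP jL[OF j] kk a by auto
    have nak: "\<not> I a k" if "k \<in> L" "I p k" "k \<noteq> k1" for k
      using G.A1[of p a k k1] pP aP that kk a by auto
    have jk: "j \<noteq> k" if "j \<in> J" "k \<in> L" "I p k" "k \<noteq> k1" for j k
      using nak[OF that(2-4)] jL[OF that(1)] by auto
    have cnk: "\<not> I (c j) k" if j: "j \<in> J" and k: "k \<in> L" "I p k" "k \<noteq> k1" for j k
    proof
      assume h: "I (c j) k"
      have cP: "c j \<in> P" using cprop[OF j] by (simp add: Px_def)
      show False
        using G.tri[of p a "c j" k1 j k] pP aP cP kk jL[OF j] k h cprop[OF j] a pc[OF j] jk[OF j k]
        by auto
    qed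
    have claim: "\<exists>e\<in>L. I (c j) e \<and> I x e"
      if j: "j \<in> J" and k: "k \<in> L" "I p k" "k \<noteq> k1" and x: "x \<in> P'" "I x k" for j k x
    proof -
      have cP: "c j \<in> P" using cprop[OF j] by (simp add: Px_def)
      obtain d r where dr: "d \<in> P" "r \<in> L" "I (c j) r" "I d r" "I d k"
        using G.A3[OF cP k(1) cnk[OF j k]] by auto
      have kLx: "k \<in> Lx" using f1'[OF p(1) k(1,2)] .
      show ?thesis
      proof (cases "d \<in> P'")
        case True
        then have "d = x" using f2[of k d x] kLx x dr by (auto simp: Lx_def)
        then show ?thesis using dr by auto
      next
        case False
        then have dx: "d \<in> Px" using dr by (simp add: Px_def)
        have cx: "c j \<in> Px" using cprop[OF j] by simp
        have rx: "r \<in> Lx" using f1'[OF cx dr(2,3)] .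
        have jx: "j \<in> Lx" using f1'[OF a(1) jL(1,2)[OF j]] .
        have pd: "p \<noteq> d"
        proof
          assume "p = d"
          then have hp: "I p r" using dr by simp
          have "r \<noteq> k1" using nk1[OF j] dr by auto
          moreover have "r \<noteq> j" using npj[OF j] hp by auto
          ultimately show False
            using G.tri[of p a "c j" k1 j r] pP aP cP kk jL[OF j] dr hp cprop[OF j] a pc[OF j]
            by auto
        qed
        have ad: "a \<noteq> d" using nak[OF k] dr by auto
        have cd: "c j \<noteq> d" using cnk[OF j k] dr by auto
        have k1r: "k1 \<noteq> r" using nk1[OF j] dr by auto
        have jr: "j \<noteq> r"
        proof
          assume "j = r"
          then have "I d j" using dr by simp
          then show False
            using G.tri[of p a d k1 j k] pP aP dr kk jL[OF j] k a pd ad jk[OF j k] by auto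
        qed
        have rk: "r \<noteq> k" using cnk[OF j k] dr by auto
        let ?cy = "[Inl p, Inr k1, Inl a, Inr j, Inl (c j), Inr r, Inl d, Inr k]"
        have "is_cycle W EH ?cy"
          unfolding is_cycle_def
          using p(1) a cx dx kx(1) jx rx kLx kk jL[OF j] dr k cprop[OF j] pc[OF j] pd ad cd k1r jr rk
            jk[OF j k] pP aP cP
          by (auto simp: W_def EH_def)
        then show ?thesis using nocyc by auto
      qed
    qed
    have x23: "x2 \<noteq> x3"
    proof
      assume "x2 = x3"
      then show False using G.A1[of x2 p k2 k3] x2 x3 x2P pP kk by auto
    qed
    have ncol23: "\<not> (\<exists>e\<in>L. I x2 e \<and> I x3 e)"
    proof
      assume "\<exists>e\<in>L. I x2 e \<and> I x3 e"
      then obtain e where e: "e \<in> L" "I x2 e" "I x3 e" by auto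
      have "e \<noteq> k2" using G.A1[of x3 p k2 k3] e x3 x2P pP kk by auto
      moreover have "e \<noteq> k3" using G.A1[of x2 p k2 k3] e x2 x2P pP kk by auto
      moreover have "p \<noteq> x2" "p \<noteq> x3" using pP x2 x3 by auto
      ultimately show False using G.tri[of p x2 x3 k2 e k3] pP x2P x2 x3 kk e x23 by auto
    qed
    define T where "T = {w\<in>P. (\<exists>e\<in>L. I w e \<and> I x2 e) \<and> (\<exists>e\<in>L. I w e \<and> I x3 e)}"
    have finT: "finite T" using finL by (simp add: T_def)
    define g where "g w = (SOME e. e \<in> L \<and> I w e \<and> I x2 e)" for w
    have gp: "g w \<in> L \<and> I w (g w) \<and> I x2 (g w)" if "w \<in> T" for w
      unfolding g_def by (rule someI_ex) (use that in \<open>auto simp: T_def\<close>)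
    have injg: "inj_on g T"
    proof (rule inj_onI)
      fix w w' assume w: "w \<in> T" "w' \<in> T" "g w = g w'"
      show "w = w'"
      proof (rule ccontr)
        assume ww: "w \<noteq> w'"
        define e where "e = g w"
        have e: "e \<in> L" "I w e" "I w' e" "I x2 e" using gp[OF w(1)] gp[OF w(2)] w(3) by (auto simp: e_def)
        obtain f where f: "f \<in> L" "I w f" "I x3 f" using w(1) by (auto simp: T_def)
        obtain f' where f': "f' \<in> L" "I w' f'" "I x3 f'" using w(2) by (auto simp: T_def)
        have wP: "w \<in> P" "w' \<in> P" using w by (auto simp: T_def)
        have x3e: "\<not> I x3 e" using ncol23 e by auto
        have "w \<noteq> x3" "w' \<noteq> x3" using x3e e by auto
        moreover have "e \<noteq> f" "e \<noteq> f'" using x3e f f' by auto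
        moreover have "f \<noteq> f'"
        proof
          assume "f = f'"
          then have "e = f" using G.A1[of w w' e f] wP e f f' ww by auto
          then show False using x3e f by simp
        qed
        ultimately show False
          using G.tri[of w w' x3 e f' f] wP x2P e f f' ww by auto
      qed
    qed
    have gT: "g ` T \<subseteq> {l\<in>L. I x2 l}" using gp by auto
    have "card T \<le> card {l\<in>L. I x2 l}"
      by (rule card_inj_on_le[OF injg gT]) (simp add: finL)
    then have cT: "card T \<le> n + 1" using G.ordP[of x2] x2P by simp
    obtain l' where l': "l' \<in> L'" "I x2 l'" using H.lines_ne[OF x2(1)] by auto
    have "\<not> I x3 l'" using ncol23 l' sub by auto
    then obtain q k' where qk: "q \<in> P'" "k' \<in> L'" "I x3 k'" "I q k'" "I q l'"
      using H.A3[OF x3(1) l'(1)] by auto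
    have qT: "q \<in> T" using qk l' sub by (auto simp: T_def)
    have pT: "p \<in> T" using pP kk x2 x3 by (auto simp: T_def)
    have cT': "c ` J \<subseteq> T"
    proof
      fix w assume "w \<in> c ` J"
      then obtain j where j: "j \<in> J" "w = c j" by auto
      have "\<exists>e\<in>L. I (c j) e \<and> I x2 e" using claim[OF j(1) kk(3,4) _ x2] kk by auto
      moreover have "\<exists>e\<in>L. I (c j) e \<and> I x3 e" using claim[OF j(1) kk(5,6) _ x3] kk by auto
      moreover have "c j \<in> P" using cprop[OF j(1)] by (simp add: Px_def)
      ultimately show "w \<in> T" using j by (auto simp: T_def)
    qed
    have injc: "inj_on c J"
    proof (rule inj_onI)
      fix j j' assume h: "j \<in> J" "j' \<in> J" "c j = c j'"
      have "c j \<in> P" using cprop[OF h(1)] by (simp add: Px_def)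
      then show "j = j'" using G.A1[of "c j" a j j'] h cprop[OF h(1)] cprop[OF h(2)] aP jL[OF h(1)] jL[OF h(2)]
        by auto
    qed
    have finJ: "finite J" using finL by (simp add: J_def)
    have "p \<notin> c ` J" using pc by auto
    moreover have "q \<notin> c ` J" using cprop qk(1) by (auto simp: Px_def)
    moreover have "p \<noteq> q" using pP qk by auto
    moreover have "card (c ` J) = n" using card_image[OF injc] cJ by simp
    ultimately have "card (insert p (insert q (c ` J))) = n + 2"
      using finJ by simp
    moreover have sT: "insert p (insert q (c ` J)) \<subseteq> T" using pT qT cT' by auto
    have "card (insert p (insert q (c ` J))) \<le> card T" by (rule card_mono[OF finT sT])
    ultimately have "n + 2 \<le> card T" by simp
    then show False using cT by simp
  qed
  have bb: "bipartite_biregular m (n + 1) 8 W EH"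
    unfolding bipartite_biregular_def
  proof (intro conjI)
    show "simple_graph W EH" by (rule sgH)
    show "has_girth W EH 8" unfolding has_girth_def using cyc8 girth_lb by blast
    show "\<exists>A B. A \<union> B = W \<and> A \<inter> B = {} \<and>
        (\<forall>x y. EH x y \<longrightarrow> (x \<in> A \<and> y \<in> B) \<or> (x \<in> B \<and> y \<in> A)) \<and>
        (\<forall>x\<in>A. card {y \<in> W. EH x y} = m) \<and>
        (\<forall>x\<in>B. card {y \<in> W. EH x y} = n + 1)"
    proof (intro exI conjI)
      show "Inr ` Lx \<union> Inl ` Px = W" by (auto simp: W_def)
      show "Inr ` Lx \<inter> Inl ` Px = {}" by auto
      show "\<forall>x y. EH x y \<longrightarrow> (x \<in> Inr ` Lx \<and> y \<in> Inl ` Px) \<or> (x \<in> Inl ` Px \<and> y \<in> Inr ` Lx)"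
      proof (intro allI impI)
        fix x y assume h: "EH x y"
        then have "x \<in> W" "y \<in> W" "levi_adj P L I x y" by (auto simp: EH_def)
        then show "(x \<in> Inr ` Lx \<and> y \<in> Inl ` Px) \<or> (x \<in> Inl ` Px \<and> y \<in> Inr ` Lx)"
          unfolding W_def by (cases x; cases y) auto
      qed
      show "\<forall>x\<in>Inr ` Lx. card {y \<in> W. EH x y} = m" using degL by auto
      show "\<forall>x\<in>Inl ` Px. card {y \<in> W. EH x y} = n + 1" using degP by auto
    qed
  qed
  have cW: "card W = card Px + card Lx"
    unfolding W_def using finX by (subst card_Un_disjoint) (auto simp: card_image)
  have X: "card Px + card P' = card P" using finL sub by (simp add: Px_def card_Diff_subset card_mono)
  have Y: "card Lx + card L' = card L" using finL sub by (simp add: Lx_def card_Diff_subset card_mono)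
  have m21: "m\<^sup>2 - 1 = k * (k + 2)" using k by (simp add: power2_eq_square algebra_simps)
  have e1: "(k+2)*((k+1)*(k+1)*t+1) = (k+2)*((k+1)*t+1) + (k+2)*(k+1)*k*t"
    by (simp add: algebra_simps)
  have e2: "((k+1)*t+1)*((k+1)*t*(k+1)+1) = (t+1)*(t*(k+1)+1) + ((k+1)*t+1)*(k*(k+2)*t)"
    by (simp add: algebra_simps)
  have Px': "card Px = (k+2)*(k+1)*k*t"
    using X e1 unfolding cP cP' nmt k by (simp add: algebra_simps)
  have Lx': "card Lx = ((k+1)*t+1)*(k*(k+2)*t)"
    using Y e2 unfolding cL cL' nmt k by (simp add: algebra_simps)
  have "card W = (m + n + 1) * (m\<^sup>2 - 1) * (n div m)"
    unfolding cW Px' Lx' m21 t_def[symmetric] unfolding nmt k by (simp add: algebra_simps)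
  then show ?thesis using bb_nat[OF bb] by metis
qed

end
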